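(* If a connected graph $G$ has a GS ordering whose $\mathcal{F}$-tree has at most $k$ leaves, then the pathwidth of $G$ is at most $k$. Moreover, this bound is tight: for every $k\ge 1$ there is a graph (e.g. the complete graph $K_{k+1}$) that has a GS ordering whose $\mathcal{F}$-tree has exactly $k$ leaves and whose pathwidth equals $k$.
   Context: All graphs are finite, simple, undirected, connected and non-empty. A GS ordering of $G$ is an ordering $(v_1,\dots,v_n)$ of $V(G)$ such that every $v_i$ with $i>1$ has a neighbor among $v_1,\dots,v_{i-1}$. Its $\mathcal{F}$-tree is the spanning tree rooted at $v_1$ in which the parent of $v_i$ ($i>1$) is its leftmost neighbor in the ordering. A leaf is a non-root vertex without children (the root is never a leaf). *)

theory Defs
  imports Main
begin

definition graph :: "'a set \<Rightarrow> ('a \<Rightarrow> 'a \<Rightarrow> bool) \<Rightarrow> bool" where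
  "graph V E \<longleftrightarrow> finite V \<and> V \<noteq> {} \<and> (\<forall>x y. E x y \<longrightarrow> x \<in> V \<and> y \<in> V)
     \<and> (\<forall>x y. E x y \<longrightarrow> E y x) \<and> (\<forall>x. \<not> E x x)"

definition connected_graph :: "'a set \<Rightarrow> ('a \<Rightarrow> 'a \<Rightarrow> bool) \<Rightarrow> bool" where
  "connected_graph V E \<longleftrightarrow> graph V E \<and> (\<forall>x\<in>V. \<forall>y\<in>V. E\<^sup>*\<^sup>* x y)"

definition gs_ordering :: "'a set \<Rightarrow> ('a \<Rightarrow> 'a \<Rightarrow> bool) \<Rightarrow> 'a list \<Rightarrow> bool" where
  "gs_ordering V E vs \<longleftrightarrow> distinct vs \<and> set vs = V \<and>
     (\<forall>i<length vs. 0 < i \<longrightarrow> (\<exists>j<i. E (vs ! j) (vs ! i)))"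

definition ftree_parent :: "('a \<Rightarrow> 'a \<Rightarrow> bool) \<Rightarrow> 'a list \<Rightarrow> 'a \<Rightarrow> 'a" where
  "ftree_parent E vs v = vs ! (LEAST j. j < length vs \<and> E (vs ! j) v)"

definition ftree_leaves :: "('a \<Rightarrow> 'a \<Rightarrow> bool) \<Rightarrow> 'a list \<Rightarrow> 'a set" where
  "ftree_leaves E vs = {v \<in> set vs. v \<noteq> hd vs \<and>
      \<not> (\<exists>u\<in>set vs. u \<noteq> hd vs \<and> ftree_parent E vs u = v)}"

definition path_decomposition :: "'a set \<Rightarrow> ('a \<Rightarrow> 'a \<Rightarrow> bool) \<Rightarrow> 'a set list \<Rightarrow> bool" where
  "path_decomposition V E Bs \<longleftrightarrow>
     (\<forall>B\<in>set Bs. B \<subseteq> V) \<and> (\<Union>(set Bs)) = V \<and>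
     (\<forall>x y. E x y \<longrightarrow> (\<exists>B\<in>set Bs. x \<in> B \<and> y \<in> B)) \<and>
     (\<forall>v i j l. i \<le> j \<and> j \<le> l \<and> l < length Bs \<and> v \<in> Bs ! i \<and> v \<in> Bs ! l \<longrightarrow> v \<in> Bs ! j)"

definition pathwidth :: "'a set \<Rightarrow> ('a \<Rightarrow> 'a \<Rightarrow> bool) \<Rightarrow> nat" where
  "pathwidth V E = (LEAST w. \<exists>Bs. path_decomposition V E Bs \<and> (\<forall>B\<in>set Bs. card B \<le> w + 1))"

end

theory Submission
  imports Defs
begin

definition chl :: "(nat \<Rightarrow> nat) \<Rightarrow> nat \<Rightarrow> nat \<Rightarrow> nat \<Rightarrow> bool" where
  "chl par n x y \<longleftrightarrow> 0 < y \<and> y < n \<and> par y = x"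

lemma chl_le:
  assumes "\<And>c. 0 < c \<Longrightarrow> c < n \<Longrightarrow> par c < c"
  shows "(chl par n)\<^sup>*\<^sup>* x y \<Longrightarrow> x \<le> y"
proof (induction rule: rtranclp_induct)
  case base then show ?case by simp
next
  case (step y z) then show ?case using assms[of z] by (auto simp: chl_def)
qed

lemma chl_back:
  "(chl par n)\<^sup>*\<^sup>* x y \<Longrightarrow> x = y \<or> (0 < y \<and> y < n \<and> (chl par n)\<^sup>*\<^sup>* x (par y))"
proof (induction rule: rtranclp_induct)
  case base then show ?case by simp
next
  case (step y z) then show ?case by (auto simp: chl_def)
qed

lemma chl_chain:
  assumes "\<And>c. 0 < c \<Longrightarrow> c < n \<Longrightarrow> par c < c"
  shows "(chl par n)\<^sup>*\<^sup>* x l \<Longrightarrow> (chl par n)\<^sup>*\<^sup>* y l \<Longrightarrow>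
     (chl par n)\<^sup>*\<^sup>* x y \<or> (chl par n)\<^sup>*\<^sup>* y x"
proof (induction l rule: less_induct)
  case (less l)
  show ?case
  proof (cases "x = l \<or> y = l")
    case True then show ?thesis using less.prems by auto
  next
    case False
    then have "0 < l \<and> l < n \<and> (chl par n)\<^sup>*\<^sup>* x (par l)"
      "(chl par n)\<^sup>*\<^sup>* y (par l)" using chl_back[OF less.prems(1)] chl_back[OF less.prems(2)] by auto
    moreover then have "par l < l" using assms by auto
    ultimately show ?thesis using less.IH by blast
  qed
qed

lemma chl_leaf:
  assumes "\<And>c. 0 < c \<Longrightarrow> c < n \<Longrightarrow> par c < c"
  shows "0 < b \<Longrightarrow> b < n \<Longrightarrow> \<exists>l\<in>{l. 0 < l \<and> l < n \<and> \<not> (\<exists>c. 0 < c \<and> c < n \<and> par c = l)}.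
            (chl par n)\<^sup>*\<^sup>* b l"
proof (induction "n - b" arbitrary: b rule: less_induct)
  case less
  show ?case
  proof (cases "\<exists>c. 0 < c \<and> c < n \<and> par c = b")
    case True
    then obtain c where c: "0 < c" "c < n" "par c = b" by blast
    then have "b < c" using assms by blast
    then have "n - c < n - b" using c by simp
    then obtain l where "l \<in> {l. 0 < l \<and> l < n \<and> \<not> (\<exists>c. 0 < c \<and> c < n \<and> par c = l)}"
      "(chl par n)\<^sup>*\<^sup>* c l" using less.hyps[of c] c by blast
    moreover have "chl par n b c" using c by (simp add: chl_def)
    ultimately show ?thesis by (meson converse_rtranclp_into_rtranclp)
  next
    case False
    then have "b \<in> {l. 0 < l \<and> l < n \<and> \<not> (\<exists>c. 0 < c \<and> c < n \<and> par c = l)}"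
      using less.prems by simp
    moreover have "(chl par n)\<^sup>*\<^sup>* b b" by (rule rtranclp.rtrancl_refl)
    ultimately show ?thesis by (rule bexI[rotated])
  qed
qed

lemma crossing_card:
  fixes par :: "nat \<Rightarrow> nat"
  assumes "\<And>c. 0 < c \<Longrightarrow> c < n \<Longrightarrow> par c < c"
  shows "card {b. 0 < b \<and> b < n \<and> par b \<le> i \<and> i < b}
     \<le> card {l. 0 < l \<and> l < n \<and> \<not> (\<exists>c. 0 < c \<and> c < n \<and> par c = l)}"
proof -
  let ?L = "{l. 0 < l \<and> l < n \<and> \<not> (\<exists>c. 0 < c \<and> c < n \<and> par c = l)}"
  let ?C = "{b. 0 < b \<and> b < n \<and> par b \<le> i \<and> i < b}"
  define f where "f b = (SOME l. l \<in> ?L \<and> (chl par n)\<^sup>*\<^sup>* b l)" for b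
  have f: "f b \<in> ?L \<and> (chl par n)\<^sup>*\<^sup>* b (f b)" if "b \<in> ?C" for b
  proof -
    have b0: "0 < b" and bn: "b < n" using that by simp_all
    have "\<exists>l\<in>?L. (chl par n)\<^sup>*\<^sup>* b l" using chl_leaf[OF assms b0 bn] .
    then have "\<exists>l. l \<in> ?L \<and> (chl par n)\<^sup>*\<^sup>* b l" by (simp only: Bex_def)
    then show ?thesis unfolding f_def by (rule someI_ex)
  qed
  have noanc: False if "b \<in> ?C" "b' \<in> ?C" "b \<noteq> b'" "(chl par n)\<^sup>*\<^sup>* b b'" for b b'
  proof -
    have "(chl par n)\<^sup>*\<^sup>* b (par b')" using chl_back[OF that(4)] that(3) by auto
    then have "b \<le> par b'" using chl_le[OF assms] by blast
    then show False using that by auto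
  qed
  have "inj_on f ?C"
  proof (rule inj_onI)
    fix b b' assume a: "b \<in> ?C" "b' \<in> ?C" "f b = f b'"
    show "b = b'"
    proof (rule ccontr)
      assume ne: "b \<noteq> b'"
      have r1: "(chl par n)\<^sup>*\<^sup>* b (f b)" using f[OF a(1)] by (rule conjunct2)
      have r2: "(chl par n)\<^sup>*\<^sup>* b' (f b)" using f[OF a(2)] a(3) by simp
      have "(chl par n)\<^sup>*\<^sup>* b b' \<or> (chl par n)\<^sup>*\<^sup>* b' b"
        by (rule chl_chain[OF assms r1 r2])
      then show False
      proof
        assume "(chl par n)\<^sup>*\<^sup>* b b'" then show False by (rule noanc[OF a(1) a(2) ne])
      next
        assume "(chl par n)\<^sup>*\<^sup>* b' b" then show False using noanc[OF a(2) a(1)] ne by blast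
      qed
    qed
  qed
  moreover have "f ` ?C \<subseteq> ?L" using f by blast
  moreover have "finite ?L" by simp
  ultimately show ?thesis by (rule card_inj_on_le)
qed

lemma part1:
  assumes cg: "connected_graph V E" and gs: "gs_ordering V E vs"
    and kk: "card (ftree_leaves E vs) \<le> k"
  shows "pathwidth V E \<le> k"
proof -
  define n where "n = length vs"
  define par where "par b = (LEAST j. j < n \<and> E (vs!j) (vs!b))" for b
  have gr: "graph V E" using cg by (simp add: connected_graph_def)
  have dist: "distinct vs" and setv: "set vs = V"
    and ex: "\<And>i. i < n \<Longrightarrow> 0 < i \<Longrightarrow> \<exists>j<i. E (vs ! j) (vs ! i)"
    using gs by (auto simp: gs_ordering_def n_def)
  have npos: "0 < n" using gr setv by (auto simp: graph_def n_def)
  have parlt: "par c < c \<and> E (vs ! par c) (vs ! c)" if c0: "0 < c" and cn: "c < n" for c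
  proof -
    obtain j where j: "j < c" "E (vs!j) (vs!c)" using ex[OF cn c0] by blast
    have "j < n \<and> E (vs!j) (vs!c)" using j cn by simp
    then have "par c \<le> j" "par c < n \<and> E (vs ! par c) (vs ! c)"
      unfolding par_def by (rule Least_le, rule LeastI)
    then show ?thesis using j by simp
  qed
  have parle: "par b \<le> a" if "a < n" "E (vs!a) (vs!b)" for a b
    unfolding par_def using that by (intro Least_le) simp
  have plt: "\<And>c. 0 < c \<Longrightarrow> c < n \<Longrightarrow> par c < c" using parlt by blast
  let ?L = "{l. 0 < l \<and> l < n \<and> \<not> (\<exists>c. 0 < c \<and> c < n \<and> par c = l)}"
  have fp: "ftree_parent E vs (vs ! c) = vs ! par c" for c
    by (simp add: ftree_parent_def par_def n_def)
  have hd: "hd vs = vs ! 0" using npos by (simp add: n_def hd_conv_nth)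
  have idx: "(vs ! a = vs ! b) = (a = b)" if "a < n" "b < n" for a b
    using dist that by (simp add: n_def nth_eq_iff_index_eq)
  have leaves: "ftree_leaves E vs = (\<lambda>i. vs ! i) ` ?L"
  proof (rule set_eqI, rule iffI)
    fix v assume "v \<in> ftree_leaves E vs"
    then have v: "v \<in> set vs" "v \<noteq> hd vs" "\<not> (\<exists>u\<in>set vs. u \<noteq> hd vs \<and> ftree_parent E vs u = v)"
      by (auto simp: ftree_leaves_def)
    obtain l where l: "l < n" "v = vs ! l" using v(1) by (auto simp: in_set_conv_nth n_def)
    have "0 < l" using l v(2) hd by (cases l) auto
    moreover have "\<not> (\<exists>c. 0 < c \<and> c < n \<and> par c = l)"
    proof
      assume "\<exists>c. 0 < c \<and> c < n \<and> par c = l"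
      then obtain c where c: "0 < c" "c < n" "par c = l" by blast
      have "vs ! c \<in> set vs" using c by (simp add: n_def)
      moreover have "vs ! c \<noteq> hd vs" using c hd idx npos by auto
      moreover have "ftree_parent E vs (vs ! c) = v" using fp c l by simp
      ultimately show False using v(3) by blast
    qed
    ultimately show "v \<in> (\<lambda>i. vs ! i) ` ?L" using l by blast
  next
    fix v assume "v \<in> (\<lambda>i. vs ! i) ` ?L"
    then obtain l where l: "0 < l" "l < n" "\<not> (\<exists>c. 0 < c \<and> c < n \<and> par c = l)" "v = vs ! l"
      by blast
    have "v \<in> set vs" using l by (simp add: n_def)
    moreover have "v \<noteq> hd vs" using l hd idx npos by auto
    moreover have "\<not> (\<exists>u\<in>set vs. u \<noteq> hd vs \<and> ftree_parent E vs u = v)"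
    proof
      assume "\<exists>u\<in>set vs. u \<noteq> hd vs \<and> ftree_parent E vs u = v"
      then obtain c where c: "c < n" "vs ! c \<noteq> hd vs" "ftree_parent E vs (vs ! c) = v"
        by (auto simp: in_set_conv_nth n_def)
      have "0 < c" using c hd by (cases c) auto
      moreover have "par c < n" using parlt[OF \<open>0 < c\<close> c(1)] c by simp
      ultimately have "par c = l" using c fp l idx by metis
      then show False using l c \<open>0 < c\<close> by blast
    qed
    ultimately show "v \<in> ftree_leaves E vs" by (simp add: ftree_leaves_def)
  qed
  have cardL: "card ?L \<le> k"
  proof -
    have "inj_on (\<lambda>i. vs ! i) ?L"
    proof (rule inj_onI)
      fix a b assume ab: "a \<in> ?L" "b \<in> ?L" "vs ! a = vs ! b"
      have "a < n" "b < n" using ab(1,2) by simp_all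
      then show "a = b" using idx ab(3) by blast
    qed
    then have "card ((\<lambda>i. vs ! i) ` ?L) = card ?L" by (rule card_image)
    then have "card (ftree_leaves E vs) = card ?L" unfolding leaves .
    then show ?thesis using kk by simp
  qed
  define C where "C i = {b. 0 < b \<and> b < n \<and> par b \<le> i \<and> i < b}" for i
  define Bs where "Bs = map (\<lambda>i. insert (vs ! i) ((\<lambda>b. vs ! b) ` C i)) [0..<n]"
  have lenB: "length Bs = n" by (simp add: Bs_def)
  have Bi: "Bs ! i = insert (vs ! i) ((\<lambda>b. vs ! b) ` C i)" if "i < n" for i
    using that by (simp add: Bs_def)
  have memB: "(vs ! b \<in> Bs ! i) = (b = i \<or> b \<in> C i)" if "i < n" "b < n" for i b
  proof -
    have "(vs ! b \<in> (\<lambda>b. vs ! b) ` C i) = (b \<in> C i)" using that idx by (auto simp: C_def)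
    then show ?thesis using Bi[OF that(1)] idx that by auto
  qed
  have pd: "path_decomposition V E Bs"
    unfolding path_decomposition_def
  proof (intro conjI allI impI)
    show "\<forall>B\<in>set Bs. B \<subseteq> V"
      using setv by (auto simp: Bs_def C_def n_def)
    show "\<Union> (set Bs) = V"
    proof
      show "\<Union> (set Bs) \<subseteq> V" using setv by (auto simp: Bs_def C_def n_def)
      show "V \<subseteq> \<Union> (set Bs)"
      proof
        fix v assume "v \<in> V"
        then obtain i where i: "i < n" "v = vs ! i" using setv by (auto simp: in_set_conv_nth n_def)
        then have "v \<in> Bs ! i" using Bi by simp
        moreover have "Bs ! i \<in> set Bs" using i lenB by simp
        ultimately show "v \<in> \<Union> (set Bs)" by blast
      qed
    qed
  next
    fix x y assume e: "E x y"
    have xy: "x \<in> V" "y \<in> V" "E y x" "x \<noteq> y" using e gr unfolding graph_def by metis+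
    obtain a where a: "a < n" "x = vs ! a" using xy setv by (auto simp: in_set_conv_nth n_def)
    obtain b where b: "b < n" "y = vs ! b" using xy setv by (auto simp: in_set_conv_nth n_def)
    have "a \<noteq> b" using a b xy by auto
    have both: "\<exists>B\<in>set Bs. vs ! a \<in> B \<and> vs ! b \<in> B"
      if "a < n" "b < n" "a < b" "E (vs ! a) (vs ! b)" for a b
    proof -
      have "b \<in> C a" using parle[OF that(1,4)] that by (auto simp: C_def)
      then have "vs ! a \<in> Bs ! a \<and> vs ! b \<in> Bs ! a" using memB that by auto
      moreover have "Bs ! a \<in> set Bs" using that lenB by simp
      ultimately show ?thesis by blast
    qed
    show "\<exists>B\<in>set Bs. x \<in> B \<and> y \<in> B"
    proof (cases "a < b")
      case True then show ?thesis using both[of a b] a b e by auto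
    next
      case False
      then have "b < a" using \<open>a \<noteq> b\<close> by simp
      then show ?thesis using both[of b a] a b xy by auto
    qed
  next
    fix v i j l assume h: "i \<le> j \<and> j \<le> l \<and> l < length Bs \<and> v \<in> Bs ! i \<and> v \<in> Bs ! l"
    then have "i < n" "j < n" "l < n" using lenB by auto
    have "\<exists>b<n. v = vs ! b" using h Bi[OF \<open>i < n\<close>] \<open>i < n\<close> by (auto simp: C_def)
    then obtain b where b: "b < n" "v = vs ! b" by blast
    have "b = i \<or> b \<in> C i" "b = l \<or> b \<in> C l" using memB h b \<open>i < n\<close> \<open>l < n\<close> by auto
    then have "b = j \<or> b \<in> C j" using h b plt[of b] by (auto simp: C_def)
    then show "v \<in> Bs ! j" using memB \<open>j < n\<close> b by auto
  qed
  have sz: "\<forall>B\<in>set Bs. card B \<le> k + 1"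
  proof
    fix B assume "B \<in> set Bs"
    then obtain i where i: "i < n" "B = Bs ! i" using lenB by (auto simp: in_set_conv_nth)
    have finC: "finite (C i)" unfolding C_def by (rule finite_subset[of _ "{..<n}"]) auto
    have "card B \<le> Suc (card ((\<lambda>b. vs ! b) ` C i))" using Bi[OF i(1)] i(2) finC
      by (simp add: card_insert_if)
    also have "\<dots> \<le> Suc (card (C i))" by (simp add: card_image_le C_def)
    also have "\<dots> \<le> Suc (card ?L)" using crossing_card[OF plt, where i=i] unfolding C_def by simp
    finally show "card B \<le> k + 1" using cardL by simp
  qed
  show ?thesis unfolding pathwidth_def using pd sz by (intro Least_le) blast
qed

lemma complete_bag:
  assumes pd: "path_decomposition V E Bs" and fin: "finite V" and ne: "V \<noteq> {}"
    and cpl: "\<And>x y. x \<in> V \<Longrightarrow> y \<in> V \<Longrightarrow> x \<noteq> y \<Longrightarrow> E x y"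
  shows "\<exists>B\<in>set Bs. V \<subseteq> B"
proof -
  define fst' where "fst' v = (LEAST i. i < length Bs \<and> v \<in> Bs ! i)" for v
  have P: "\<Union>(set Bs) = V" "\<And>x y. E x y \<Longrightarrow> \<exists>B\<in>set Bs. x \<in> B \<and> y \<in> B"
    "\<And>v i j l. i \<le> j \<Longrightarrow> j \<le> l \<Longrightarrow> l < length Bs \<Longrightarrow> v \<in> Bs ! i \<Longrightarrow> v \<in> Bs ! l \<Longrightarrow> v \<in> Bs ! j"
    using pd unfolding path_decomposition_def by blast+
  have exi: "\<exists>i. i < length Bs \<and> v \<in> Bs ! i" if "v \<in> V" for v
    using that P(1) by (auto simp: in_set_conv_nth)
  have f1: "fst' v < length Bs \<and> v \<in> Bs ! fst' v" if "v \<in> V" for v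
    unfolding fst'_def using exi[OF that] by (rule LeastI_ex)
  have f2: "fst' v \<le> i" if "i < length Bs" "v \<in> Bs ! i" for v i
    unfolding fst'_def using that by (intro Least_le) simp
  define m where "m = Max (fst' ` V)"
  have "m \<in> fst' ` V" unfolding m_def using fin ne by simp
  then obtain v0 where v0: "v0 \<in> V" "fst' v0 = m" by blast
  have mle: "fst' v \<le> m" if "v \<in> V" for v unfolding m_def using fin that by simp
  have "V \<subseteq> Bs ! m"
  proof
    fix v assume v: "v \<in> V"
    show "v \<in> Bs ! m"
    proof (cases "v = v0")
      case True then show ?thesis using f1 v0 by auto
    next
      case False
      then obtain B where B: "B \<in> set Bs" "v \<in> B" "v0 \<in> B" using P(2) cpl v v0 by blast
      then obtain t where t: "t < length Bs" "B = Bs ! t" by (auto simp: in_set_conv_nth)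
      have "m \<le> t" using f2[OF t(1)] B t v0 by auto
      then show ?thesis using P(3)[of "fst' v" m t v] mle[OF v] f1[OF v] t B by auto
    qed
  qed
  moreover have "m < length Bs" using f1 v0 by auto
  then have "Bs ! m \<in> set Bs" by (rule nth_mem)
  ultimately show ?thesis by blast
qed

lemma part2:
  assumes "k \<ge> 1"
  shows "\<exists>(V :: nat set) E vs. connected_graph V E \<and> gs_ordering V E vs
               \<and> card (ftree_leaves E vs) = k \<and> pathwidth V E = k"
proof -
  define V :: "nat set" where "V = {..k}"
  define E where "E = (\<lambda>x y::nat. x \<noteq> y \<and> x \<le> k \<and> y \<le> k)"
  define vs where "vs = [0..<Suc k]"
  have g: "graph V E" by (auto simp: graph_def V_def E_def)
  have cg: "connected_graph V E"
    unfolding connected_graph_def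
  proof (intro conjI ballI g)
    fix x y assume "x \<in> V" "y \<in> V"
    then show "E\<^sup>*\<^sup>* x y"
    proof (cases "x = y")
      case False
      then have "E x y" using \<open>x \<in> V\<close> \<open>y \<in> V\<close> by (simp add: E_def V_def)
      then show ?thesis by (rule r_into_rtranclp)
    qed simp
  qed
  have gs: "gs_ordering V E vs"
  proof -
    have "set vs = V" by (auto simp: vs_def V_def)
    moreover have "\<exists>j<i. E (vs ! j) (vs ! i)" if "i < length vs" "0 < i" for i
    proof -
      have "vs ! 0 = 0" "vs ! i = i" "i \<le> k" using that by (simp_all add: vs_def del: upt_Suc)
      then have "E (vs ! 0) (vs ! i)" using that by (simp add: E_def)
      then show ?thesis using that by blast
    qed
    ultimately show ?thesis unfolding gs_ordering_def by (simp add: vs_def)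
  qed
  have par: "ftree_parent E vs u = 0" if "u \<le> k" "u \<noteq> 0" for u
  proof -
    have "(LEAST j. j < length vs \<and> E (vs ! j) u) = 0"
      using that by (intro Least_equality) (auto simp: vs_def E_def simp del: upt_Suc)
    then show ?thesis by (simp add: ftree_parent_def vs_def del: upt_Suc)
  qed
  have setvs: "set vs = {..k}" by (auto simp: vs_def)
  have hd: "hd vs = 0" by (simp add: vs_def upt_rec)
  have key: "(\<exists>u\<in>set vs. u \<noteq> hd vs \<and> ftree_parent E vs u = v) \<longleftrightarrow> v = 0" for v
  proof
    assume "\<exists>u\<in>set vs. u \<noteq> hd vs \<and> ftree_parent E vs u = v"
    then obtain u where u: "u \<in> set vs" "u \<noteq> hd vs" "ftree_parent E vs u = v" by blast
    have "u \<le> k" "u \<noteq> 0" using u(1,2) setvs hd by auto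
    then show "v = 0" using par u(3) by metis
  next
    assume v: "v = 0"
    have "1 \<in> set vs" "1 \<noteq> hd vs" using setvs hd assms by auto
    moreover have "ftree_parent E vs 1 = v" using par[of 1] assms v by simp
    ultimately show "\<exists>u\<in>set vs. u \<noteq> hd vs \<and> ftree_parent E vs u = v" by blast
  qed
  have "ftree_leaves E vs = {v \<in> set vs. v \<noteq> 0}"
    unfolding ftree_leaves_def key by (auto simp: hd)
  also have "\<dots> = {1..k}" using setvs by auto
  finally have "ftree_leaves E vs = {1..k}" .
  then have cl: "card (ftree_leaves E vs) = k" by simp
  have pdV: "path_decomposition V E [V]"
    unfolding path_decomposition_def
  proof (intro conjI allI impI)
    fix x y assume "E x y" then show "\<exists>B\<in>set [V]. x \<in> B \<and> y \<in> B"
      by (simp add: E_def V_def)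
  next
    fix v i j l assume h: "i \<le> j \<and> j \<le> l \<and> l < length [V] \<and> v \<in> [V] ! i \<and> v \<in> [V] ! l"
    then have "j = 0" "l = 0" by simp_all
    then show "v \<in> [V] ! j" using h by simp
  qed simp_all
  have le: "pathwidth V E \<le> k" unfolding pathwidth_def
    by (rule Least_le) (rule exI[of _ "[V]"], intro conjI pdV, simp add: V_def)
  have ge: "k \<le> pathwidth V E"
  proof -
    have "\<exists>Bs. path_decomposition V E Bs \<and> (\<forall>B\<in>set Bs. card B \<le> pathwidth V E + 1)"
      unfolding pathwidth_def
      by (rule LeastI[of _ k]) (rule exI[of _ "[V]"], intro conjI pdV, simp add: V_def)
    then obtain Bs where Bs: "path_decomposition V E Bs" "\<forall>B\<in>set Bs. card B \<le> pathwidth V E + 1"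
      by blast
    have "\<exists>B\<in>set Bs. V \<subseteq> B"
    proof (rule complete_bag[OF Bs(1)])
      show "finite V" "V \<noteq> {}" by (simp_all add: V_def)
      fix x y assume "x \<in> V" "y \<in> V" "x \<noteq> y"
      then show "E x y" by (simp add: E_def V_def)
    qed
    then obtain B where B: "B \<in> set Bs" "V \<subseteq> B" by blast
    have "\<forall>B\<in>set Bs. B \<subseteq> V" using Bs(1) unfolding path_decomposition_def by (elim conjE)
    then have "B \<subseteq> V" using B(1) by blast
    then have BV: "B = V" using B(2) by (rule equalityI)
    have "card B \<le> pathwidth V E + 1" using Bs(2) B(1) by blast
    then have "card V \<le> pathwidth V E + 1" unfolding BV .
    then show ?thesis by (simp add: V_def)
  qed
  have pw: "pathwidth V E = k" using le ge by (rule le_antisym)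
  show ?thesis by (rule exI[of _ V], rule exI[of _ E], rule exI[of _ vs]) (intro conjI cg gs cl pw)
qed

theorem lemma3p8:
  shows "(\<forall>(V :: 'a set) E vs (k::nat).
            connected_graph V E \<and> gs_ordering V E vs \<and> card (ftree_leaves E vs) \<le> k
            \<longrightarrow> pathwidth V E \<le> k)
       \<and> (\<forall>k::nat. k \<ge> 1 \<longrightarrow>
            (\<exists>(V :: nat set) E vs. connected_graph V E \<and> gs_ordering V E vs
               \<and> card (ftree_leaves E vs) = k \<and> pathwidth V E = k))"
  apply (intro conjI allI impI)
   apply (elim conjE)
   apply (erule (2) part1)
  apply (erule part2)
  done

end
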